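(* Let $\mathcal C,\mathcal C'\subseteq\mathbb F_2^n$ be binary linear codes, $\sigma\in S_n$, $G$ a reduced basis of $\mathcal C$ (output of Algorithm R for $\mathcal C$ and the error-vector order built from some admissible order) and $G'$ a reduced basis of $\mathcal C'$ (output of Algorithm R for $\mathcal C'$ and the error-vector order built from some admissible order). Put $G^\star=\sigma(G)$. The following are equivalent: (i) $\mathcal C'=\sigma(\mathcal C)$; (ii) $G^\star$ is a reduced basis for $\mathcal C'$, i.e. it is the output of Algorithm R for $\mathcal C'$ and the error-vector order built from some admissible order (some ordering of the variables); (iii) every binomial of $G^\star$ reduces to zero modulo $G'$, and every binomial of $G'$ reduces to zero modulo $G^\star$.
   Context: Binary setting: $[X]$ is the free commutative monoid on $X=\{x_1,\dots,x_n\}$; $\psi(\prod x_i^{\beta_i})=(\beta_i\bmod 2)_i\in\mathbb F_2^n$; a code of dimension $k$ has parity check matrix $H$ ($n\times(n-k)$, code $=\{c:cH=0\}$); syndrome $\xi(w)=\psi(w)H$. $\mathrm{Ind}(w)=\{i:x_i\mid w\}$. For an admissible order $\prec$ the error-vector order is $u<_e w$ iff $|\mathrm{Ind}(u)|<|\mathrm{Ind}(w)|$, or equality and $u\prec w$. For $\sigma\in S_n$: $\sigma((y_i)_i)=(y_{\sigma^{-1}(i)})_i$, $\sigma(\mathcal C)=\{\sigma(c):c\in\mathcal C\}$, on $[X]$ $\sigma$ is the automorphism $x_i\mapsto x_{\sigma(i)}$, acting termwise on binomials. Algorithm R: list $L$ sorted increasingly by $<_e$, set $N$, set $G$ of binomials;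 initially $L=(1)$, $N=G=\emptyset$. While $L\neq\emptyset$: remove the $<_e$-smallest $w$; if $w$ is divisible by the leading word of a binomial in $G$, discard it; otherwise if some $w'\in N$ has $\xi(w')=\xi(w)$, add $w-w'$ to $G$ with leading word $w$; else add $w$ to $N$ and insert all $wx$ ($x\in X$) into $L$. Output $(N,G)$. For a set $B$ of binomials each with a designated leading word (for $\sigma(G)$, the leading word of $\sigma(u-v)$ is $\sigma(u)$), one-step reduction modulo $B$: a non-standard word (some exponent $\ge2$) reduces to its standard form (exponents mod 2); a standard word $w=us$ with $u-u'\in B$ of leading word $u$ reduces to $u's$. Irreducible means no reduction applies. A binomial $u-v$ reduces to zero modulo $B$ if some irreducible word obtained from $u$ by a finite sequence of one-step reductions equals some irreducible word so obtained from $v$. *)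

theory Defs
  imports "HOL-Combinatorics.Permutations"
begin

type_synonym word = "nat \<Rightarrow> nat"          (* exponent vector *)
type_synonym bvec = "nat \<Rightarrow> bool"          (* vector of F_2^n, True = 1 *)

definition words :: "nat \<Rightarrow> word set" where
  "words n = {w. \<forall>i\<ge>n. w i = 0}"

definition one_w :: word where "one_w = (\<lambda>_. 0)"

definition var_w :: "nat \<Rightarrow> word" where "var_w i = (\<lambda>j. if j = i then 1 else 0)"

definition mult_w :: "word \<Rightarrow> word \<Rightarrow> word" where
  "mult_w u v = (\<lambda>i. u i + v i)"

definition divides_w :: "word \<Rightarrow> word \<Rightarrow> bool" where
  "divides_w u w \<longleftrightarrow> (\<forall>i. u i \<le> w i)"

definition Ind :: "word \<Rightarrow> nat set" where
  "Ind w = {i. 0 < w i}"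

definition vectors :: "nat \<Rightarrow> bvec set" where
  "vectors n = {c. \<forall>i\<ge>n. \<not> c i}"

definition psi :: "nat \<Rightarrow> word \<Rightarrow> bvec" where
  "psi n w = (\<lambda>i. i < n \<and> odd (w i))"

definition binary_linear_code :: "nat \<Rightarrow> bvec set \<Rightarrow> bool" where
  "binary_linear_code n C \<longleftrightarrow> C \<subseteq> vectors n \<and> (\<lambda>_. False) \<in> C \<and>
     (\<forall>a\<in>C. \<forall>b\<in>C. (\<lambda>i. a i \<noteq> b i) \<in> C)"

definition vec_mat :: "nat \<Rightarrow> nat \<Rightarrow> bvec \<Rightarrow> (nat \<Rightarrow> nat \<Rightarrow> bool) \<Rightarrow> bvec" where
  "vec_mat n m c H = (\<lambda>j. j < m \<and> odd (card {i. i < n \<and> c i \<and> H i j}))"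

(* H (n x m) is a parity check matrix of C: C = {c : cH = 0} and m = n - dim C,
   i.e. |C| * 2^m = 2^n *)
definition parity_check :: "nat \<Rightarrow> bvec set \<Rightarrow> nat \<Rightarrow> (nat \<Rightarrow> nat \<Rightarrow> bool) \<Rightarrow> bool" where
  "parity_check n C m H \<longleftrightarrow>
     (\<forall>c\<in>vectors n. c \<in> C \<longleftrightarrow> vec_mat n m c H = (\<lambda>_. False)) \<and>
     card C * 2 ^ m = 2 ^ n"

definition syndrome :: "nat \<Rightarrow> nat \<Rightarrow> (nat \<Rightarrow> nat \<Rightarrow> bool) \<Rightarrow> word \<Rightarrow> bvec" where
  "syndrome n m H w = vec_mat n m (psi n w) H"

(* ord is the strict order \<prec> *)
definition admissible :: "nat \<Rightarrow> (word \<Rightarrow> word \<Rightarrow> bool) \<Rightarrow> bool" where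
  "admissible n ord \<longleftrightarrow>
     (\<forall>u\<in>words n. \<not> ord u u) \<and>
     (\<forall>u\<in>words n. \<forall>v\<in>words n. \<forall>w\<in>words n. ord u v \<longrightarrow> ord v w \<longrightarrow> ord u w) \<and>
     (\<forall>u\<in>words n. \<forall>v\<in>words n. u \<noteq> v \<longrightarrow> ord u v \<or> ord v u) \<and>
     (\<forall>w\<in>words n. w \<noteq> one_w \<longrightarrow> ord one_w w) \<and>
     (\<forall>u\<in>words n. \<forall>v\<in>words n. \<forall>w\<in>words n. ord u v \<longrightarrow> ord (mult_w u w) (mult_w v w))"

definition err_less :: "(word \<Rightarrow> word \<Rightarrow> bool) \<Rightarrow> word \<Rightarrow> word \<Rightarrow> bool" where
  "err_less ord u w \<longleftrightarrow> card (Ind u) < card (Ind w) \<or>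
     (card (Ind u) = card (Ind w) \<and> ord u w)"

(* state: (L, N, G); L is the (sorted, duplicate-free) list, kept as a set;
   G is a set of binomials (u, v) meaning u - v with leading word u *)
type_synonym rstate = "word set \<times> word set \<times> (word \<times> word) set"

inductive R_step :: "nat \<Rightarrow> (word \<Rightarrow> bvec) \<Rightarrow> (word \<Rightarrow> word \<Rightarrow> bool) \<Rightarrow> rstate \<Rightarrow> rstate \<Rightarrow> bool"
  for n xi ord where
  discard: "\<lbrakk> w \<in> L; \<forall>w'\<in>L. w' \<noteq> w \<longrightarrow> err_less ord w w';
             \<exists>(u, v)\<in>G. divides_w u w \<rbrakk>
           \<Longrightarrow> R_step n xi ord (L, N, G) (L - {w}, N, G)"
| newbin: "\<lbrakk> w \<in> L; \<forall>w'\<in>L. w' \<noteq> w \<longrightarrow> err_less ord w w';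
             \<not> (\<exists>(u, v)\<in>G. divides_w u w); w' \<in> N; xi w' = xi w \<rbrakk>
           \<Longrightarrow> R_step n xi ord (L, N, G) (L - {w}, N, G \<union> {(w, w')})"
| newstd: "\<lbrakk> w \<in> L; \<forall>w'\<in>L. w' \<noteq> w \<longrightarrow> err_less ord w w';
             \<not> (\<exists>(u, v)\<in>G. divides_w u w); \<not> (\<exists>w'\<in>N. xi w' = xi w) \<rbrakk>
           \<Longrightarrow> R_step n xi ord (L, N, G)
                 ((L - {w}) \<union> {mult_w w (var_w i) | i. i < n}, N \<union> {w}, G)"

definition R_output :: "nat \<Rightarrow> (word \<Rightarrow> bvec) \<Rightarrow> (word \<Rightarrow> word \<Rightarrow> bool) \<Rightarrow>
    word set \<Rightarrow> (word \<times> word) set \<Rightarrow> bool" where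
  "R_output n xi ord N G \<longleftrightarrow> (R_step n xi ord)\<^sup>*\<^sup>* ({one_w}, {}, {}) ({}, N, G)"

definition reduced_basis :: "nat \<Rightarrow> bvec set \<Rightarrow> (word \<times> word) set \<Rightarrow> bool" where
  "reduced_basis n C G \<longleftrightarrow>
     (\<exists>ord m H N. admissible n ord \<and> parity_check n C m H \<and>
        R_output n (syndrome n m H) ord N G)"

definition perm_vec :: "(nat \<Rightarrow> nat) \<Rightarrow> bvec \<Rightarrow> bvec" where
  "perm_vec \<sigma> y = (\<lambda>i. y (inv \<sigma> i))"

definition perm_code :: "(nat \<Rightarrow> nat) \<Rightarrow> bvec set \<Rightarrow> bvec set" where
  "perm_code \<sigma> C = perm_vec \<sigma> ` C"

(* automorphism x_i \<mapsto> x_(\<sigma> i) of [X] *)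
definition perm_word :: "(nat \<Rightarrow> nat) \<Rightarrow> word \<Rightarrow> word" where
  "perm_word \<sigma> w = (\<lambda>j. w (inv \<sigma> j))"

definition perm_binomials :: "(nat \<Rightarrow> nat) \<Rightarrow> (word \<times> word) set \<Rightarrow> (word \<times> word) set" where
  "perm_binomials \<sigma> G = (\<lambda>(u, v). (perm_word \<sigma> u, perm_word \<sigma> v)) ` G"

definition standard_w :: "word \<Rightarrow> bool" where
  "standard_w w \<longleftrightarrow> (\<forall>i. w i < 2)"

inductive red1 :: "(word \<times> word) set \<Rightarrow> word \<Rightarrow> word \<Rightarrow> bool" for B where
  nonstd: "\<not> standard_w w \<Longrightarrow> red1 B w (\<lambda>i. w i mod 2)"
| bin: "\<lbrakk> standard_w (mult_w u s); (u, u') \<in> B \<rbrakk> \<Longrightarrow> red1 B (mult_w u s) (mult_w u' s)"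

definition irreducible_w :: "(word \<times> word) set \<Rightarrow> word \<Rightarrow> bool" where
  "irreducible_w B w \<longleftrightarrow> \<not> (\<exists>w'. red1 B w w')"

definition reduces_to_zero :: "(word \<times> word) set \<Rightarrow> word \<times> word \<Rightarrow> bool" where
  "reduces_to_zero B b \<longleftrightarrow>
     (\<exists>z. (red1 B)\<^sup>*\<^sup>* (fst b) z \<and> (red1 B)\<^sup>*\<^sup>* (snd b) z \<and> irreducible_w B z)"

end

theory Submission
  imports Defs
begin

definition xorv :: "bvec \<Rightarrow> bvec \<Rightarrow> bvec" where
  "xorv a b = (\<lambda>i. a i \<noteq> b i)"

definition stdw :: "word \<Rightarrow> word" where
  "stdw w = (\<lambda>i. w i mod 2)"

lemma mult_w_comm: "mult_w u v = mult_w v u"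
  by (auto simp: mult_w_def)

lemma mult_one_w[simp]: "mult_w one_w w = w" "mult_w w one_w = w"
  by (auto simp: mult_w_def one_w_def)

lemma words_mult: "u \<in> words n \<Longrightarrow> v \<in> words n \<Longrightarrow> mult_w u v \<in> words n"
  by (auto simp: words_def mult_w_def)

lemma var_words: "i < n \<Longrightarrow> var_w i \<in> words n"
  by (auto simp: words_def var_w_def)

lemma one_words[simp]: "one_w \<in> words n"
  by (auto simp: words_def one_w_def)

lemma Ind_sub: assumes "w \<in> words n" shows "Ind w \<subseteq> {..<n}"
proof
  fix i assume "i \<in> Ind w"
  then have "0 < w i" by (simp add: Ind_def)
  have h: "\<forall>i\<ge>n. w i = 0" using assms by (simp add: words_def)
  show "i \<in> {..<n}"
  proof (rule ccontr)
    assume "i \<notin> {..<n}"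
    then have "n \<le> i" by simp
    then have "w i = 0" using h by blast
    then show False using \<open>0 < w i\<close> by simp
  qed
qed

lemma Ind_fin: "w \<in> words n \<Longrightarrow> finite (Ind w)"
  using Ind_sub finite_subset by blast

lemma adm_irrefl: assumes "admissible n ord" "u \<in> words n" shows "\<not> ord u u"
proof -
  have "\<forall>u\<in>words n. \<not> ord u u" using assms(1) unfolding admissible_def by (elim conjE) assumption
  then show ?thesis using assms(2) by blast
qed

lemma adm_trans: assumes "admissible n ord" "u \<in> words n" "v \<in> words n" "w \<in> words n"
  "ord u v" "ord v w" shows "ord u w"
proof -
  have "\<forall>u\<in>words n. \<forall>v\<in>words n. \<forall>w\<in>words n. ord u v \<longrightarrow> ord v w \<longrightarrow> ord u w"
    using assms(1) unfolding admissible_def by (elim conjE) assumption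
  then show ?thesis using assms(2-) by blast
qed

lemma adm_total: assumes "admissible n ord" "u \<in> words n" "v \<in> words n" "u \<noteq> v"
  shows "ord u v \<or> ord v u"
proof -
  have "\<forall>u\<in>words n. \<forall>v\<in>words n. u \<noteq> v \<longrightarrow> ord u v \<or> ord v u"
    using assms(1) unfolding admissible_def by (elim conjE) assumption
  then show ?thesis using assms(2-) by blast
qed

lemma adm_one: assumes "admissible n ord" "w \<in> words n" "w \<noteq> one_w" shows "ord one_w w"
proof -
  have "\<forall>w\<in>words n. w \<noteq> one_w \<longrightarrow> ord one_w w"
    using assms(1) unfolding admissible_def by (elim conjE) assumption
  then show ?thesis using assms(2-) by blast
qed

lemma adm_mult: assumes "admissible n ord" "u \<in> words n" "v \<in> words n" "w \<in> words n"
  "ord u v" shows "ord (mult_w u w) (mult_w v w)"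
proof -
  have "\<forall>u\<in>words n. \<forall>v\<in>words n. \<forall>w\<in>words n. ord u v \<longrightarrow> ord (mult_w u w) (mult_w v w)"
    using assms(1) unfolding admissible_def by (elim conjE) assumption
  then show ?thesis using assms(2-) by blast
qed

lemma err_irrefl: "admissible n ord \<Longrightarrow> u \<in> words n \<Longrightarrow> \<not> err_less ord u u"
  unfolding err_less_def using adm_irrefl by blast

lemma err_trans: "admissible n ord \<Longrightarrow> a \<in> words n \<Longrightarrow> b \<in> words n \<Longrightarrow> c \<in> words n
  \<Longrightarrow> err_less ord a b \<Longrightarrow> err_less ord b c \<Longrightarrow> err_less ord a c"
  unfolding err_less_def using adm_trans[of n ord a b c] by linarith

lemma Ind_mult_var: "Ind (mult_w w (var_w i)) = insert i (Ind w)"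
  by (auto simp: Ind_def mult_w_def var_w_def)

lemma err_succ: assumes "admissible n ord" "w \<in> words n" "i < n"
  shows "err_less ord w (mult_w w (var_w i))"
proof (cases "i \<in> Ind w")
  case True
  have "var_w i \<noteq> one_w" by (auto simp: var_w_def one_w_def fun_eq_iff)
  then have "ord one_w (var_w i)" by (rule adm_one[OF assms(1) var_words[OF assms(3)]])
  then have "ord (mult_w one_w w) (mult_w (var_w i) w)"
    by (rule adm_mult[OF assms(1) one_words var_words[OF assms(3)] assms(2)])
  then have "ord w (mult_w w (var_w i))" using mult_w_comm[of "var_w i" w] by simp
  then show ?thesis using True by (simp add: err_less_def Ind_mult_var insert_absorb)
next
  case False
  then show ?thesis using Ind_fin[OF assms(2)]
    by (simp add: err_less_def Ind_mult_var)
qed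

fun Rinv :: "nat \<Rightarrow> (word \<Rightarrow> bvec) \<Rightarrow> (word \<Rightarrow> word \<Rightarrow> bool) \<Rightarrow> rstate \<Rightarrow> bool" where
  "Rinv n xi ord (L, N, G) \<longleftrightarrow>
    L \<subseteq> words n \<and> N \<subseteq> words n \<and>
    ((L = {one_w} \<and> N = {} \<and> G = {}) \<or> one_w \<in> N) \<and>
    (\<forall>a\<in>N. \<forall>b\<in>N. xi a = xi b \<longrightarrow> a = b) \<and>
    (\<forall>a\<in>N. \<forall>b\<in>L. err_less ord a b) \<and>
    (\<forall>(u,v)\<in>G. u \<in> words n \<and> v \<in> N \<and> xi u = xi v \<and> err_less ord v u) \<and>
    (\<forall>w0\<in>N. \<forall>i<n. mult_w w0 (var_w i) \<in> L \<or> mult_w w0 (var_w i) \<in> N \<or>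
        (\<exists>(u,v)\<in>G. divides_w u (mult_w w0 (var_w i))))"

lemma Rinv_intro: "L \<subseteq> words n \<Longrightarrow> N \<subseteq> words n \<Longrightarrow>
    ((L = {one_w} \<and> N = {} \<and> G = {}) \<or> one_w \<in> N) \<Longrightarrow>
    (\<forall>a\<in>N. \<forall>b\<in>N. xi a = xi b \<longrightarrow> a = b) \<Longrightarrow>
    (\<forall>a\<in>N. \<forall>b\<in>L. err_less ord a b) \<Longrightarrow>
    (\<forall>(u,v)\<in>G. u \<in> words n \<and> v \<in> N \<and> xi u = xi v \<and> err_less ord v u) \<Longrightarrow>
    (\<forall>w0\<in>N. \<forall>i<n. mult_w w0 (var_w i) \<in> L \<or> mult_w w0 (var_w i) \<in> N \<or>
        (\<exists>(u,v)\<in>G. divides_w u (mult_w w0 (var_w i)))) \<Longrightarrow> Rinv n xi ord (L, N, G)"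
  by (simp only: Rinv.simps)

lemma divides_refl: "divides_w u u" by (simp add: divides_w_def)

lemma Rinv_step:
  assumes st: "R_step n xi ord s s'" and adm: "admissible n ord" and inv: "Rinv n xi ord s"
  shows "Rinv n xi ord s'"
  using st
proof (cases rule: R_step.cases)
  case (discard w L G N)
  have i: "L \<subseteq> words n" "N \<subseteq> words n"
    "(L = {one_w} \<and> N = {} \<and> G = {}) \<or> one_w \<in> N"
    "\<forall>a\<in>N. \<forall>b\<in>N. xi a = xi b \<longrightarrow> a = b"
    "\<forall>a\<in>N. \<forall>b\<in>L. err_less ord a b"
    "\<forall>(u,v)\<in>G. u \<in> words n \<and> v \<in> N \<and> xi u = xi v \<and> err_less ord v u"
    "\<forall>w0\<in>N. \<forall>i<n. mult_w w0 (var_w i) \<in> L \<or> mult_w w0 (var_w i) \<in> N \<or>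
        (\<exists>(u,v)\<in>G. divides_w u (mult_w w0 (var_w i)))"
    using inv discard(1) by simp_all
  have c1: "L - {w} \<subseteq> words n" using i(1) by blast
  have c3: "one_w \<in> N" using i(3) discard(5) by blast
  have c5: "\<forall>a\<in>N. \<forall>b\<in>L - {w}. err_less ord a b" using i(5) by blast
  have c7: "\<forall>w0\<in>N. \<forall>i<n. mult_w w0 (var_w i) \<in> L - {w} \<or> mult_w w0 (var_w i) \<in> N \<or>
        (\<exists>(u,v)\<in>G. divides_w u (mult_w w0 (var_w i)))"
  proof (intro ballI allI impI)
    fix w0 i assume "w0 \<in> N" "i < n"
    then have "mult_w w0 (var_w i) \<in> L \<or> mult_w w0 (var_w i) \<in> N \<or>
        (\<exists>(u,v)\<in>G. divides_w u (mult_w w0 (var_w i)))" using i(7) by blast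
    then show "mult_w w0 (var_w i) \<in> L - {w} \<or> mult_w w0 (var_w i) \<in> N \<or>
        (\<exists>(u,v)\<in>G. divides_w u (mult_w w0 (var_w i)))"
      using discard(5) by blast
  qed
  have "Rinv n xi ord (L - {w}, N, G)"
    by (rule Rinv_intro[OF c1 i(2) disjI2[OF c3] i(4) c5 i(6) c7])
  then show ?thesis using discard(2) by (simp only:)
next
  case (newbin w L G w' N)
  have "err_less ord w' w" using newbin inv by auto
  have i: "L \<subseteq> words n" "N \<subseteq> words n"
    "(L = {one_w} \<and> N = {} \<and> G = {}) \<or> one_w \<in> N"
    "\<forall>a\<in>N. \<forall>b\<in>N. xi a = xi b \<longrightarrow> a = b"
    "\<forall>a\<in>N. \<forall>b\<in>L. err_less ord a b"
    "\<forall>(u,v)\<in>G. u \<in> words n \<and> v \<in> N \<and> xi u = xi v \<and> err_less ord v u"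
    "\<forall>w0\<in>N. \<forall>i<n. mult_w w0 (var_w i) \<in> L \<or> mult_w w0 (var_w i) \<in> N \<or>
        (\<exists>(u,v)\<in>G. divides_w u (mult_w w0 (var_w i)))"
    using inv newbin(1) by simp_all
  have c3: "one_w \<in> N" using i(3) newbin by auto
  have c6: "\<forall>(u,v)\<in>G \<union> {(w,w')}. u \<in> words n \<and> v \<in> N \<and> xi u = xi v \<and> err_less ord v u"
    using i(1,6) newbin \<open>err_less ord w' w\<close> by auto
  have c7: "\<forall>w0\<in>N. \<forall>i<n. mult_w w0 (var_w i) \<in> L - {w} \<or> mult_w w0 (var_w i) \<in> N \<or>
        (\<exists>(u,v)\<in>G \<union> {(w,w')}. divides_w u (mult_w w0 (var_w i)))"
  proof (intro ballI allI impI)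
    fix w0 i assume "w0 \<in> N" "i < n"
    then have "mult_w w0 (var_w i) \<in> L \<or> mult_w w0 (var_w i) \<in> N \<or>
        (\<exists>(u,v)\<in>G. divides_w u (mult_w w0 (var_w i)))" using i(7) by blast
    then show "mult_w w0 (var_w i) \<in> L - {w} \<or> mult_w w0 (var_w i) \<in> N \<or>
        (\<exists>(u,v)\<in>G \<union> {(w,w')}. divides_w u (mult_w w0 (var_w i)))"
      using divides_refl[of w] by blast
  qed
  have c1: "L - {w} \<subseteq> words n" using i(1) by blast
  have c5: "\<forall>a\<in>N. \<forall>b\<in>L - {w}. err_less ord a b" using i(5) by blast
  have "Rinv n xi ord (L - {w}, N, G \<union> {(w,w')})"
    by (rule Rinv_intro[OF c1 i(2) disjI2[OF c3] i(4) c5 c6 c7])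
  then show ?thesis using newbin(2) by (simp only:)
next
  case (newstd w L G N)
  have i: "L \<subseteq> words n" "N \<subseteq> words n"
    "(L = {one_w} \<and> N = {} \<and> G = {}) \<or> one_w \<in> N"
    "\<forall>a\<in>N. \<forall>b\<in>N. xi a = xi b \<longrightarrow> a = b"
    "\<forall>a\<in>N. \<forall>b\<in>L. err_less ord a b"
    "\<forall>(u,v)\<in>G. u \<in> words n \<and> v \<in> N \<and> xi u = xi v \<and> err_less ord v u"
    "\<forall>w0\<in>N. \<forall>i<n. mult_w w0 (var_w i) \<in> L \<or> mult_w w0 (var_w i) \<in> N \<or>
        (\<exists>(u,v)\<in>G. divides_w u (mult_w w0 (var_w i)))"
    using inv newstd(1) by simp_all
  let ?S = "{mult_w w (var_w i) | i. i < n}"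
  have wL: "w \<in> words n" using newstd(3) i(1) by blast
  have S: "?S \<subseteq> words n"
  proof
    fix x assume "x \<in> ?S"
    then obtain i where "i < n" "x = mult_w w (var_w i)" by blast
    then show "x \<in> words n" using words_mult[OF wL var_words] by simp
  qed
  have 1: "(L - {w}) \<union> ?S \<subseteq> words n" using S i(1) by blast
  have 3: "one_w \<in> N \<union> {w}"
  proof (cases "one_w \<in> N")
    case False
    then have "L = {one_w}" using i(3) by blast
    then have "w = one_w" using newstd(3) by blast
    then show ?thesis by blast
  qed blast
  have 4: "\<forall>a\<in>N \<union> {w}. \<forall>b\<in>(L - {w}) \<union> ?S. err_less ord a b"
  proof (intro ballI)
    fix a b assume a: "a \<in> N \<union> {w}" and b: "b \<in> (L - {w}) \<union> ?S"
    show "err_less ord a b"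
    proof (cases "b \<in> ?S")
      case True
      then obtain i where i': "i < n" "b = mult_w w (var_w i)" by auto
      have wb: "err_less ord w b" using err_succ[OF adm wL i'(1)] i' by simp
      show ?thesis
      proof (cases "a = w")
        case True then show ?thesis using wb by simp
      next
        case False
        then have "a \<in> N" using a by auto
        then have "err_less ord a w" using i(5) newstd(3) by blast
        moreover have "a \<in> words n" using \<open>a \<in> N\<close> i(2) by blast
        moreover have "b \<in> words n" using S i' by auto
        ultimately show ?thesis using err_trans[OF adm _ wL _ _ wb] by blast
      qed
    next
      case False
      then have "b \<in> L" "b \<noteq> w" using b by auto
      then show ?thesis using a i(5) newstd(4) by blast
    qed
  qed
  have 5: "\<forall>w0\<in>N \<union> {w}. \<forall>i<n. mult_w w0 (var_w i) \<in> (L - {w}) \<union> ?S \<or> mult_w w0 (var_w i) \<in> N \<union> {w} \<or>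
        (\<exists>(u,v)\<in>G. divides_w u (mult_w w0 (var_w i)))"
  proof (intro ballI allI impI)
    fix w0 i assume w0: "w0 \<in> N \<union> {w}" and "i < n"
    show "mult_w w0 (var_w i) \<in> (L - {w}) \<union> ?S \<or> mult_w w0 (var_w i) \<in> N \<union> {w} \<or>
        (\<exists>(u,v)\<in>G. divides_w u (mult_w w0 (var_w i)))"
    proof (cases "w0 = w")
      case True
      then show ?thesis using \<open>i < n\<close> by blast
    next
      case False
      then have "w0 \<in> N" using w0 by blast
      then have "mult_w w0 (var_w i) \<in> L \<or> mult_w w0 (var_w i) \<in> N \<or>
        (\<exists>(u,v)\<in>G. divides_w u (mult_w w0 (var_w i)))" using i(7) \<open>i < n\<close> by blast
      then show ?thesis by blast
    qed
  qed
  have c2: "N \<union> {w} \<subseteq> words n" using i(2) wL by blast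
  have c4: "\<forall>a\<in>N \<union> {w}. \<forall>b\<in>N \<union> {w}. xi a = xi b \<longrightarrow> a = b"
  proof (intro ballI impI)
    fix a b assume ab: "a \<in> N \<union> {w}" "b \<in> N \<union> {w}" "xi a = xi b"
    have n6: "\<forall>w'\<in>N. xi w' \<noteq> xi w" using newstd(6) by blast
    show "a = b"
    proof (cases "a = w")
      case True
      show ?thesis
      proof (rule ccontr)
        assume "a \<noteq> b"
        then have "b \<in> N" using ab True by blast
        then show False using n6 ab True by auto
      qed
    next
      case False
      then have "a \<in> N" using ab by blast
      show ?thesis
      proof (cases "b = w")
        case True
        then show ?thesis using n6 ab \<open>a \<in> N\<close> by auto
      next
        case False
        then have "b \<in> N" using ab by blast
        then show ?thesis using i(4) ab \<open>a \<in> N\<close> by blast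
      qed
    qed
  qed
  have c6: "\<forall>(u,v)\<in>G. u \<in> words n \<and> v \<in> N \<union> {w} \<and> xi u = xi v \<and> err_less ord v u"
    using i(6) by blast
  have "Rinv n xi ord ((L - {w}) \<union> ?S, N \<union> {w}, G)"
    by (rule Rinv_intro[OF 1 c2 disjI2[OF 3] c4 4 c6 5])
  then show ?thesis using newstd(2) by (simp only:)
qed

lemma Rinv_star:
  assumes "(R_step n xi ord)\<^sup>*\<^sup>* s0 s" "admissible n ord" "s0 = ({one_w}, {}, {})"
  shows "Rinv n xi ord s"
  using assms(1)
proof (induction rule: rtranclp_induct)
  case base
  show ?case unfolding assms(3) by simp
next
  case (step y z)
  show ?case by (rule Rinv_step[OF step(2) assms(2) step(3)])
qed

lemma psi_mult: "psi n (mult_w u s) = xorv (psi n u) (psi n s)"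
  by (auto simp: psi_def xorv_def mult_w_def fun_eq_iff)

lemma psi_std: "psi n (stdw w) = psi n w"
  by (auto simp: psi_def stdw_def fun_eq_iff)

lemma psi_vec: "psi n w \<in> vectors n"
  by (simp add: psi_def vectors_def)

lemma psi_one: "psi n one_w = (\<lambda>_. False)"
  by (simp add: psi_def one_w_def)

lemma xorv_self[simp]: "xorv a a = (\<lambda>_. False)"
  by (simp add: xorv_def)

lemma xorv_zero[simp]: "xorv a (\<lambda>_. False) = a" "xorv (\<lambda>_. False) a = a"
  by (simp_all add: xorv_def)

lemma xorv_comm: "xorv a b = xorv b a"
  by (auto simp: xorv_def fun_eq_iff)

lemma xorv_chain: "xorv (xorv a b) (xorv b c) = xorv a c"
  by (auto simp: xorv_def fun_eq_iff)

lemma xorv_cancel: "xorv a (xorv a b) = b"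
  by (auto simp: xorv_def fun_eq_iff)

lemma xorv_eq0: "xorv x y = (\<lambda>_. False) \<longleftrightarrow> x = y"
  by (auto simp: xorv_def fun_eq_iff)

lemma blc_zero: assumes "binary_linear_code n D" shows "(\<lambda>_. False) \<in> D"
  using assms unfolding binary_linear_code_def by (elim conjE) assumption

lemma blc_sub: assumes "binary_linear_code n D" shows "D \<subseteq> vectors n"
  using assms unfolding binary_linear_code_def by (elim conjE) assumption

lemma blc_xor: assumes "binary_linear_code n D" "a \<in> D" "b \<in> D" shows "xorv a b \<in> D"
proof -
  have "\<forall>a\<in>D. \<forall>b\<in>D. (\<lambda>i. a i \<noteq> b i) \<in> D"
    using assms(1) unfolding binary_linear_code_def by (elim conjE) assumption
  then show ?thesis using assms(2,3) unfolding xorv_def by blast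
qed

lemma red_pres1:
  assumes D: "binary_linear_code n D" and B: "\<forall>(u,v)\<in>B. xorv (psi n u) (psi n v) \<in> D"
    and r: "red1 B w w'"
  shows "xorv (psi n w) (psi n w') \<in> D"
  using r
proof (cases rule: red1.cases)
  case nonstd
  then have "w' = stdw w" by (simp add: stdw_def)
  then show ?thesis using psi_std blc_zero[OF D] by simp
next
  case (bin u s u')
  have "xorv (psi n u) (psi n u') \<in> D" using B bin(4) by blast
  moreover have "xorv (psi n w) (psi n w') = xorv (psi n u) (psi n u')"
  proof -
    have "psi n w = xorv (psi n u) (psi n s)" using bin(1) psi_mult by simp
    moreover have "psi n w' = xorv (psi n u') (psi n s)" using bin(2) psi_mult by simp
    ultimately show ?thesis by (auto simp: xorv_def fun_eq_iff)
  qed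
  ultimately show ?thesis by simp
qed

lemma red_pres_star:
  assumes D: "binary_linear_code n D" and B: "\<forall>(u,v)\<in>B. xorv (psi n u) (psi n v) \<in> D"
    and r: "(red1 B)\<^sup>*\<^sup>* w z"
  shows "xorv (psi n w) (psi n z) \<in> D"
  using r
proof (induction rule: rtranclp_induct)
  case base
  then show ?case using blc_zero[OF D] by simp
next
  case (step y z)
  have "xorv (psi n y) (psi n z) \<in> D" by (rule red_pres1[OF D B step(2)])
  then have "xorv (xorv (psi n w) (psi n y)) (xorv (psi n y) (psi n z)) \<in> D"
    using blc_xor[OF D step(3)] by blast
  then show ?case by (simp add: xorv_chain)
qed

lemma card_xor_parity:
  assumes "finite A" "finite B"
  shows "odd (card ((A \<union> B) - (A \<inter> B))) \<longleftrightarrow> (odd (card A) \<noteq> odd (card B))"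
proof -
  have 1: "card (A \<union> B) + card (A \<inter> B) = card A + card B"
    using card_Un_Int[OF assms] by simp
  have 2: "card ((A \<union> B) - (A \<inter> B)) = card (A \<union> B) - card (A \<inter> B)"
    by (rule card_Diff_subset) (use assms in auto)
  have 3: "card (A \<inter> B) \<le> card (A \<union> B)"
    by (rule card_mono) (use assms in auto)
  have "card ((A \<union> B) - (A \<inter> B)) + 2 * card (A \<inter> B) = card A + card B"
    using 1 2 3 by simp
  then show ?thesis by presburger
qed

lemma vec_mat_xor: "vec_mat n m (xorv a b) H = xorv (vec_mat n m a H) (vec_mat n m b H)"
proof (rule ext)
  fix j
  let ?A = "{i. i < n \<and> a i \<and> H i j}" and ?B = "{i. i < n \<and> b i \<and> H i j}"
  have e: "{i. i < n \<and> xorv a b i \<and> H i j} = (?A \<union> ?B) - (?A \<inter> ?B)"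
    by (auto simp: xorv_def)
  have "odd (card {i. i < n \<and> xorv a b i \<and> H i j}) \<longleftrightarrow> (odd (card ?A) \<noteq> odd (card ?B))"
    unfolding e by (rule card_xor_parity) auto
  then show "vec_mat n m (xorv a b) H j = xorv (vec_mat n m a H) (vec_mat n m b H) j"
    by (auto simp: vec_mat_def xorv_def)
qed

lemma SYN:
  assumes D: "binary_linear_code n D" and P: "parity_check n D m H"
  shows "syndrome n m H a = syndrome n m H b \<longleftrightarrow> xorv (psi n a) (psi n b) \<in> D"
proof -
  have PC: "\<forall>c\<in>vectors n. c \<in> D \<longleftrightarrow> vec_mat n m c H = (\<lambda>_. False)"
    using P unfolding parity_check_def by (elim conjE) assumption
  have xv: "xorv (psi n a) (psi n b) \<in> vectors n"
    using psi_vec[of n a] psi_vec[of n b] by (auto simp: vectors_def xorv_def)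
  have "syndrome n m H a = syndrome n m H b \<longleftrightarrow>
      xorv (syndrome n m H a) (syndrome n m H b) = (\<lambda>_. False)"
    by (simp add: xorv_eq0)
  also have "xorv (syndrome n m H a) (syndrome n m H b) = vec_mat n m (xorv (psi n a) (psi n b)) H"
    by (simp add: syndrome_def vec_mat_xor)
  finally show ?thesis using PC xv by blast
qed

lemma Rinv_D:
  assumes "Rinv n xi ord (L, N, G)"
  shows "L \<subseteq> words n" and "N \<subseteq> words n"
    and "(L = {one_w} \<and> N = {} \<and> G = {}) \<or> one_w \<in> N"
    and "\<forall>a\<in>N. \<forall>b\<in>N. xi a = xi b \<longrightarrow> a = b"
    and "\<forall>a\<in>N. \<forall>b\<in>L. err_less ord a b"
    and "\<forall>(u,v)\<in>G. u \<in> words n \<and> v \<in> N \<and> xi u = xi v \<and> err_less ord v u"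
    and "\<forall>w0\<in>N. \<forall>i<n. mult_w w0 (var_w i) \<in> L \<or> mult_w w0 (var_w i) \<in> N \<or>
        (\<exists>(u,v)\<in>G. divides_w u (mult_w w0 (var_w i)))"
  using assms unfolding Rinv.simps by - (elim conjE, assumption)+

lemma irr_std:
  assumes "standard_w w" shows "irreducible_w B w \<longleftrightarrow> \<not> (\<exists>(u,v)\<in>B. divides_w u w)"
proof
  assume irr: "irreducible_w B w"
  show "\<not> (\<exists>(u,v)\<in>B. divides_w u w)"
  proof
    assume "\<exists>(u,v)\<in>B. divides_w u w"
    then obtain u v where uv: "(u,v) \<in> B" "divides_w u w" by blast
    define s where "s = (\<lambda>i. w i - u i)"
    have ws: "mult_w u s = w" using uv(2) by (auto simp: s_def mult_w_def divides_w_def fun_eq_iff)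
    have "standard_w (mult_w u s)" using ws assms by simp
    then have "red1 B (mult_w u s) (mult_w v s)" using uv(1) by (rule red1.bin)
    then show False using irr ws unfolding irreducible_w_def by auto
  qed
next
  assume nd: "\<not> (\<exists>(u,v)\<in>B. divides_w u w)"
  show "irreducible_w B w" unfolding irreducible_w_def
  proof
    assume "\<exists>w'. red1 B w w'"
    then obtain w' where "red1 B w w'" by blast
    then show False
    proof (cases rule: red1.cases)
      case nonstd then show False using assms by simp
    next
      case (bin u s u')
      have "divides_w u w" using bin(1) by (simp add: divides_w_def mult_w_def)
      then show False using nd bin(4) by blast
    qed
  qed
qed

lemma in_N:
  assumes inv: "Rinv n xi ord ({}, N, G)"
  shows "w \<in> words n \<Longrightarrow> standard_w w \<Longrightarrow> \<not> (\<exists>(u,v)\<in>G. divides_w u w) \<Longrightarrow> w \<in> N"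
proof (induction "card (Ind w)" arbitrary: w rule: less_induct)
  case less
  have one: "one_w \<in> N" using Rinv_D(3)[OF inv] by blast
  have clo: "\<forall>w0\<in>N. \<forall>i<n. mult_w w0 (var_w i) \<in> {} \<or> mult_w w0 (var_w i) \<in> N \<or>
        (\<exists>(u,v)\<in>G. divides_w u (mult_w w0 (var_w i)))" using Rinv_D(7)[OF inv] .
  show ?case
  proof (cases "Ind w = {}")
    case True
    then have "w = one_w" by (auto simp: Ind_def one_w_def fun_eq_iff)
    then show ?thesis using one by simp
  next
    case False
    then obtain i where i: "i \<in> Ind w" by blast
    have "w i < 2" using less.prems(2) by (simp add: standard_w_def)
    moreover have "0 < w i" using i by (simp add: Ind_def)
    ultimately have wi: "w i = 1" by simp
    define w0 where "w0 = w(i := 0)"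
    have Ind0: "Ind w0 = Ind w - {i}" by (auto simp: w0_def Ind_def)
    have fin: "finite (Ind w)" using Ind_fin less.prems(1) by blast
    have "card (Ind w0) < card (Ind w)" unfolding Ind0 by (rule card_Diff1_less[OF fin i])
    moreover have "w0 \<in> words n" using less.prems(1) by (simp add: w0_def words_def)
    moreover have "standard_w w0" using less.prems(2) by (simp add: w0_def standard_w_def)
    moreover have "\<not> (\<exists>(u,v)\<in>G. divides_w u w0)"
    proof
      assume "\<exists>(u,v)\<in>G. divides_w u w0"
      then obtain u v where uv: "(u,v) \<in> G" "divides_w u w0" by blast
      have "divides_w u w" unfolding divides_w_def
      proof
        fix j
        have "u j \<le> w0 j" using uv(2) by (simp add: divides_w_def)
        moreover have "w0 j \<le> w j" by (simp add: w0_def)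
        ultimately show "u j \<le> w j" by (rule le_trans)
      qed
      then show False using less.prems(3) uv(1) by blast
    qed
    ultimately have w0N: "w0 \<in> N" using less.hyps by blast
    have "i < n" using Ind_sub[OF less.prems(1)] i by auto
    have eq: "mult_w w0 (var_w i) = w" using wi by (auto simp: w0_def mult_w_def var_w_def fun_eq_iff)
    have "mult_w w0 (var_w i) \<in> {} \<or> mult_w w0 (var_w i) \<in> N \<or>
        (\<exists>(u,v)\<in>G. divides_w u (mult_w w0 (var_w i)))" using bspec[OF clo w0N] \<open>i < n\<close> by blast
    then show ?thesis using eq less.prems(3) by simp
  qed
qed

lemma std_le:
  assumes adm: "admissible n ord" and v: "v \<in> words n"
  shows "stdw v = v \<or> ord (stdw v) v"
proof -
  define t where "t = (\<lambda>i. v i - v i mod 2)"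
  have vt: "mult_w (stdw v) t = v" by (auto simp: t_def stdw_def mult_w_def fun_eq_iff)
  have tw: "t \<in> words n" using v by (auto simp: t_def words_def)
  have sw: "stdw v \<in> words n" using v by (auto simp: stdw_def words_def)
  show ?thesis
  proof (cases "t = one_w")
    case True then show ?thesis using vt by simp
  next
    case False
    then have "ord one_w t" by (rule adm_one[OF adm tw])
    then have "ord (mult_w one_w (stdw v)) (mult_w t (stdw v))" by (rule adm_mult[OF adm one_words tw sw])
    then have "ord (stdw v) v" using vt mult_w_comm[of t "stdw v"] by simp
    then show ?thesis by blast
  qed
qed

lemma red_step:
  assumes adm: "admissible n ord" and w: "w \<in> words n" "standard_w w"
    and uG: "(u,u') \<in> G" and u: "u \<in> words n" and u': "u' \<in> words n"
    and e: "err_less ord u' u" and d: "divides_w u w"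
  shows "\<exists>r. (red1 G)\<^sup>*\<^sup>* w r \<and> standard_w r \<and> r \<in> words n \<and> err_less ord r w"
proof -
  define s where "s = (\<lambda>i. w i - u i)"
  define r where "r = (\<lambda>i. (u' i + s i) mod 2)"
  have ws: "mult_w u s = w" using d by (auto simp: s_def mult_w_def divides_w_def fun_eq_iff)
  have sw: "s \<in> words n" using w(1) by (auto simp: s_def words_def)
  have w2: "\<And>i. w i < 2" using w(2) by (simp add: standard_w_def)
  have s2: "\<And>i. s i < 2"
  proof -
    fix i have "s i \<le> w i" by (simp add: s_def)
    then show "s i < 2" using w2[of i] by linarith
  qed
  have "standard_w (mult_w u s)" using ws w(2) by simp
  then have r1: "red1 G (mult_w u s) (mult_w u' s)" using uG by (rule red1.bin)
  have rstep: "(red1 G)\<^sup>*\<^sup>* (mult_w u' s) r"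
  proof (cases "standard_w (mult_w u' s)")
    case True
    then have "\<And>i. mult_w u' s i < 2" by (simp add: standard_w_def)
    then have "r = mult_w u' s" by (simp add: r_def mult_w_def fun_eq_iff)
    then show ?thesis by simp
  next
    case False
    have "red1 G (mult_w u' s) (\<lambda>i. mult_w u' s i mod 2)" by (rule red1.nonstd[OF False])
    moreover have "(\<lambda>i. mult_w u' s i mod 2) = r" by (simp add: r_def mult_w_def)
    ultimately show ?thesis by auto
  qed
  have red: "(red1 G)\<^sup>*\<^sup>* w r" using r1 rstep ws by (metis converse_rtranclp_into_rtranclp)
  have rstd: "standard_w r" by (simp add: r_def standard_w_def)
  have rw: "r \<in> words n" using u' sw by (simp add: r_def words_def)
  define Od where "Od = {i. odd (u' i)}"
  define S where "S = Ind s"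
  have finS: "finite S" using Ind_fin[OF sw] by (simp add: S_def)
  have O_sub: "Od \<subseteq> Ind u'"
  proof
    fix i assume "i \<in> Od"
    then have "odd (u' i)" by (simp add: Od_def)
    then have "u' i \<noteq> 0" by (metis even_zero)
    then show "i \<in> Ind u'" by (simp add: Ind_def)
  qed
  have finO: "finite Od" using Ind_fin[OF u'] O_sub finite_subset by blast
  have IndR: "Ind r = (Od \<union> S) - (Od \<inter> S)"
  proof (rule set_eqI)
    fix i
    have "s i = 0 \<or> s i = 1" using s2[of i] by linarith
    then show "i \<in> Ind r \<longleftrightarrow> i \<in> (Od \<union> S) - (Od \<inter> S)"
      by (auto simp: r_def Od_def S_def Ind_def) presburger+
  qed
  have u1: "card (Od \<union> S) + card (Od \<inter> S) = card Od + card S"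
    using card_Un_Int[OF finO finS] by simp
  have u2: "card ((Od \<union> S) - (Od \<inter> S)) = card (Od \<union> S) - card (Od \<inter> S)"
    by (rule card_Diff_subset) (use finO finS in auto)
  have u3: "card (Od \<inter> S) \<le> card (Od \<union> S)"
    by (rule card_mono) (use finO finS in auto)
  have cardR: "card (Ind r) + 2 * card (Od \<inter> S) = card Od + card S"
    using u1 u2 u3 IndR by simp
  have IndW: "Ind w = Ind u \<union> S"
  proof -
    have "Ind w = Ind (mult_w u s)" using ws by simp
    also have "\<dots> = Ind u \<union> S" by (auto simp: Ind_def mult_w_def S_def)
    finally show ?thesis .
  qed
  have disj: "Ind u \<inter> S = {}"
  proof (rule ccontr)
    assume "Ind u \<inter> S \<noteq> {}"
    then obtain i where "0 < u i" "0 < s i" by (auto simp: Ind_def S_def)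
    moreover have "mult_w u s i = w i" using ws by simp
    then have "u i + s i = w i" by (simp add: mult_w_def)
    then have "u i + s i < 2" using w2[of i] by simp
    ultimately show False by linarith
  qed
  have cardW: "card (Ind w) = card (Ind u) + card S"
    using card_Un_disjoint[OF Ind_fin[OF u] finS disj] IndW by simp
  have cO: "card Od \<le> card (Ind u')" using card_mono[OF Ind_fin[OF u'] O_sub] .
  show ?thesis
  proof (cases "card (Ind r) < card (Ind w)")
    case True then show ?thesis using red rstd rw by (auto simp: err_less_def)
  next
    case False
    have eu: "card (Ind u') < card (Ind u) \<or> (card (Ind u') = card (Ind u) \<and> ord u' u)"
      using e by (simp add: err_less_def)
    have nlt: "\<not> card (Ind u') < card (Ind u)"
    proof
      assume "card (Ind u') < card (Ind u)"
      then have "card (Ind r) < card (Ind w)" using cardR cardW cO by linarith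
      then show False using False by simp
    qed
    then have eq: "card (Ind u') = card (Ind u)" and ou: "ord u' u" using eu by auto
    have c0: "card (Od \<inter> S) = 0" using False cardR cardW cO eq by linarith
    have OS: "Od \<inter> S = {}" using c0 finO by simp
    have cR: "card (Ind r) = card (Ind w)" using False cardR cardW cO eq by linarith
    have rm: "r = mult_w (stdw u') s"
    proof (rule ext)
      fix i
      show "r i = mult_w (stdw u') s i"
      proof (cases "s i = 0")
        case True then show ?thesis by (simp add: r_def mult_w_def stdw_def)
      next
        case False
        then have si: "s i = 1" using s2[of i] by linarith
        then have "i \<in> S" by (simp add: S_def Ind_def)
        then have "i \<notin> Od" using OS by blast
        then have "even (u' i)" by (simp add: Od_def)
        then show ?thesis using si by (simp add: r_def mult_w_def stdw_def) presburger
      qed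
    qed
    have su'w: "stdw u' \<in> words n" using u' by (simp add: stdw_def words_def)
    have "stdw u' = u' \<or> ord (stdw u') u'" by (rule std_le[OF adm u'])
    then have "ord (stdw u') u"
    proof
      assume "stdw u' = u'" then show ?thesis using ou by simp
    next
      assume h: "ord (stdw u') u'"
      have uw: "u \<in> words n" "u' \<in> words n" by (rule u, rule u')
      show ?thesis using adm_trans[of n ord "stdw u'" u' u] adm su'w uw h ou by blast
    qed
    then have "ord (mult_w (stdw u') s) (mult_w u s)" by (rule adm_mult[OF adm su'w u sw])
    then have "ord r w" using rm ws by simp
    then show ?thesis using red rstd rw cR by (auto simp: err_less_def)
  qed
qed

definition SW :: "nat \<Rightarrow> word set" where "SW n = {w \<in> words n. standard_w w}"

lemma SW_fin: "finite (SW n)"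
proof -
  have inj: "inj_on Ind (SW n)"
  proof (rule inj_onI)
    fix x y assume x: "x \<in> SW n" and y: "y \<in> SW n" and e: "Ind x = Ind y"
    show "x = y"
    proof (rule ext)
      fix i
      have "x i < 2" "y i < 2" using x y by (auto simp: SW_def standard_w_def)
      moreover have "(0 < x i) = (0 < y i)" using e by (auto simp: Ind_def set_eq_iff)
      ultimately show "x i = y i" by linarith
    qed
  qed
  have "Ind ` SW n \<subseteq> Pow {..<n}" using Ind_sub by (auto simp: SW_def)
  then have "finite (Ind ` SW n)" using finite_subset by blast
  then show ?thesis using finite_imageD[OF _ inj] by blast
qed

lemma NF_std:
  assumes adm: "admissible n ord" and inv: "Rinv n xi ord ({}, N, G)"
  shows "w \<in> SW n \<Longrightarrow> \<exists>z. (red1 G)\<^sup>*\<^sup>* w z \<and> irreducible_w G z \<and> z \<in> N"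
proof (induction "card {v \<in> SW n. err_less ord v w}" arbitrary: w rule: less_induct)
  case less
  have w: "w \<in> words n" "standard_w w" using less.prems by (auto simp: SW_def)
  show ?case
  proof (cases "\<exists>(u,v)\<in>G. divides_w u w")
    case True
    then obtain u u' where uG: "(u,u') \<in> G" and d: "divides_w u w" by blast
    have Gp: "u \<in> words n \<and> u' \<in> N \<and> xi u = xi u' \<and> err_less ord u' u"
      using Rinv_D(6)[OF inv] uG by blast
    have uw: "u' \<in> words n" using Gp Rinv_D(2)[OF inv] by blast
    have uw2: "u \<in> words n" "err_less ord u' u" using Gp by auto
    obtain r where rs: "(red1 G)\<^sup>*\<^sup>* w r" "standard_w r" "r \<in> words n" "err_less ord r w"
      using red_step[OF adm w uG uw2(1) uw uw2(2) d] by blast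
    have rSW: "r \<in> SW n" using rs by (simp add: SW_def)
    have sub: "{v \<in> SW n. err_less ord v r} \<subset> {v \<in> SW n. err_less ord v w}"
    proof
      show "{v \<in> SW n. err_less ord v r} \<subseteq> {v \<in> SW n. err_less ord v w}"
      proof
        fix v assume "v \<in> {v \<in> SW n. err_less ord v r}"
        then have v: "v \<in> SW n" "err_less ord v r" by auto
        have "v \<in> words n" using v(1) by (simp add: SW_def)
        then have "err_less ord v w" using err_trans[OF adm _ rs(3) w(1) v(2) rs(4)] by blast
        then show "v \<in> {v \<in> SW n. err_less ord v w}" using v(1) by blast
      qed
      have "r \<in> {v \<in> SW n. err_less ord v w}" using rSW rs(4) by blast
      moreover have "r \<notin> {v \<in> SW n. err_less ord v r}" using err_irrefl[OF adm rs(3)] by blast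
      ultimately show "{v \<in> SW n. err_less ord v r} \<noteq> {v \<in> SW n. err_less ord v w}" by blast
    qed
    have "finite {v \<in> SW n. err_less ord v w}" using SW_fin by simp
    then have "card {v \<in> SW n. err_less ord v r} < card {v \<in> SW n. err_less ord v w}"
      using sub by (rule psubset_card_mono)
    then obtain z where z: "(red1 G)\<^sup>*\<^sup>* r z" "irreducible_w G z" "z \<in> N"
      using less.hyps rSW by blast
    have "(red1 G)\<^sup>*\<^sup>* w z" using rs(1) z(1) by (rule rtranclp_trans)
    then show ?thesis using z by blast
  next
    case False
    then have "irreducible_w G w" using irr_std[OF w(2)] by simp
    moreover have "w \<in> N" by (rule in_N[OF inv w(1) w(2) False])
    ultimately show ?thesis by blast
  qed
qed

lemma NF:
  assumes adm: "admissible n ord" and inv: "Rinv n xi ord ({}, N, G)" and w: "w \<in> words n"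
  shows "\<exists>z. (red1 G)\<^sup>*\<^sup>* w z \<and> irreducible_w G z \<and> z \<in> N"
proof (cases "standard_w w")
  case True
  then show ?thesis using NF_std[OF adm inv] w by (simp add: SW_def)
next
  case False
  have r: "red1 G w (stdw w)" unfolding stdw_def by (rule red1.nonstd[OF False])
  have "stdw w \<in> SW n" using w by (simp add: SW_def stdw_def words_def standard_w_def)
  then obtain z where z: "(red1 G)\<^sup>*\<^sup>* (stdw w) z" "irreducible_w G z" "z \<in> N"
    using NF_std[OF adm inv] by blast
  have "(red1 G)\<^sup>*\<^sup>* w z" using r z(1) by (rule converse_rtranclp_into_rtranclp)
  then show ?thesis using z by blast
qed

lemma RB_props:
  assumes D: "binary_linear_code n D" and RB: "reduced_basis n D G"
  shows RB_P1: "\<forall>(u,v)\<in>G. u \<in> words n \<and> v \<in> words n \<and> xorv (psi n u) (psi n v) \<in> D"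
    and RB_P2: "\<And>u v. u \<in> words n \<Longrightarrow> v \<in> words n \<Longrightarrow> xorv (psi n u) (psi n v) \<in> D
                \<Longrightarrow> reduces_to_zero G (u,v)"
    and RB_P3: "\<And>E. binary_linear_code n E \<Longrightarrow> \<forall>(u,v)\<in>G. xorv (psi n u) (psi n v) \<in> E \<Longrightarrow> D \<subseteq> E"
proof -
  obtain ord m H N where adm: "admissible n ord" and pc: "parity_check n D m H"
    and ro: "R_output n (syndrome n m H) ord N G"
    using RB unfolding reduced_basis_def by blast
  let ?xi = "syndrome n m H"
  have inv: "Rinv n ?xi ord ({}, N, G)"
    using Rinv_star[OF ro[unfolded R_output_def] adm refl] .
  have Gp: "\<forall>(u,v)\<in>G. u \<in> words n \<and> v \<in> N \<and> ?xi u = ?xi v \<and> err_less ord v u"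
    by (rule Rinv_D(6)[OF inv])
  have Nsub: "N \<subseteq> words n" by (rule Rinv_D(2)[OF inv])
  have dist: "\<forall>a\<in>N. \<forall>b\<in>N. ?xi a = ?xi b \<longrightarrow> a = b" by (rule Rinv_D(4)[OF inv])
  have one: "one_w \<in> N" using Rinv_D(3)[OF inv] by blast
  show P1: "\<forall>(u,v)\<in>G. u \<in> words n \<and> v \<in> words n \<and> xorv (psi n u) (psi n v) \<in> D"
  proof (intro ballI, clarify)
    fix u v assume uv: "(u,v) \<in> G"
    then have h: "u \<in> words n" "v \<in> N" "?xi u = ?xi v" using Gp by auto
    then show "u \<in> words n \<and> v \<in> words n \<and> xorv (psi n u) (psi n v) \<in> D"
      using Nsub SYN[OF D pc] by blast
  qed
  have P1': "\<forall>(u,v)\<in>G. xorv (psi n u) (psi n v) \<in> D" using P1 by blast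
  show "reduces_to_zero G (u,v)" if u: "u \<in> words n" and v: "v \<in> words n"
    and uvD: "xorv (psi n u) (psi n v) \<in> D" for u v
  proof -
    obtain z1 where z1: "(red1 G)\<^sup>*\<^sup>* u z1" "irreducible_w G z1" "z1 \<in> N"
      using NF[OF adm inv u] by blast
    obtain z2 where z2: "(red1 G)\<^sup>*\<^sup>* v z2" "irreducible_w G z2" "z2 \<in> N"
      using NF[OF adm inv v] by blast
    have a: "xorv (psi n u) (psi n z1) \<in> D" by (rule red_pres_star[OF D P1' z1(1)])
    have b: "xorv (psi n v) (psi n z2) \<in> D" by (rule red_pres_star[OF D P1' z2(1)])
    have "xorv (xorv (psi n u) (psi n v)) (xorv (psi n v) (psi n z2)) \<in> D"
      by (rule blc_xor[OF D uvD b])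
    then have c: "xorv (psi n u) (psi n z2) \<in> D" by (simp add: xorv_chain)
    have "xorv (xorv (psi n z1) (psi n u)) (xorv (psi n u) (psi n z2)) \<in> D"
      using blc_xor[OF D _ c] a xorv_comm by metis
    then have "xorv (psi n z1) (psi n z2) \<in> D" by (simp add: xorv_chain)
    then have "?xi z1 = ?xi z2" using SYN[OF D pc] by blast
    then have "z1 = z2" using dist z1(3) z2(3) by blast
    then show ?thesis unfolding reduces_to_zero_def using z1 z2 by auto
  qed
  show "D \<subseteq> E" if E: "binary_linear_code n E" and GE: "\<forall>(u,v)\<in>G. xorv (psi n u) (psi n v) \<in> E" for E
  proof
    fix c assume cD: "c \<in> D"
    have cv: "c \<in> vectors n" using blc_sub[OF D] cD by blast
    define wc where "wc = (\<lambda>i. if c i then 1 else 0 :: nat)"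
    have wcw: "wc \<in> words n" using cv by (simp add: wc_def words_def vectors_def)
    have pwc: "psi n wc = c"
    proof (rule ext)
      fix i show "psi n wc i = c i"
        using cv by (cases "i < n") (auto simp: psi_def wc_def vectors_def)
    qed
    obtain z where z: "(red1 G)\<^sup>*\<^sup>* wc z" "irreducible_w G z" "z \<in> N"
      using NF[OF adm inv wcw] by blast
    have zE: "xorv c (psi n z) \<in> E" using red_pres_star[OF E GE z(1)] pwc by simp
    have zD: "xorv c (psi n z) \<in> D" using red_pres_star[OF D P1' z(1)] pwc by simp
    have "xorv c (xorv c (psi n z)) \<in> D" by (rule blc_xor[OF D cD zD])
    then have "psi n z \<in> D" by (simp add: xorv_cancel)
    then have "xorv (psi n z) (psi n one_w) \<in> D" by (simp add: psi_one)
    then have "?xi z = ?xi one_w" using SYN[OF D pc] by blast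
    then have "z = one_w" using dist z(3) one by blast
    then show "c \<in> E" using zE by (simp add: psi_one)
  qed
qed

context
  fixes p :: "nat \<Rightarrow> nat" and n :: nat
  assumes p: "p permutes {..<n}"
begin

lemma p_inv1: "p (inv p x) = x" and p_inv2: "inv p (p x) = x"
  using permutes_inverses[OF p] by auto

lemma pw_pw_inv: "perm_word p (perm_word (inv p) w) = w"
  by (simp add: perm_word_def permutes_inv_inv[OF p] p_inv1)

lemma pw_inv_pw: "perm_word (inv p) (perm_word p w) = w"
  by (simp add: perm_word_def permutes_inv_inv[OF p] p_inv2)

lemma pw_inj: "perm_word p u = perm_word p v \<longleftrightarrow> u = v"
  by (metis pw_inv_pw)

lemma pw_inj': "inj (perm_word p)"
  by (rule injI) (simp add: pw_inj)

lemma pw_words: "w \<in> words n \<Longrightarrow> perm_word p w \<in> words n"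
proof -
  assume w: "w \<in> words n"
  have ip: "inv p permutes {..<n}" by (rule permutes_inv[OF p])
  show ?thesis unfolding words_def perm_word_def
  proof (intro CollectI allI impI)
    fix i assume "n \<le> i"
    then have "inv p i = i" using permutes_not_in[OF ip] by simp
    then show "w (inv p i) = 0" using w \<open>n \<le> i\<close> by (simp add: words_def)
  qed
qed

lemma pw_mult: "perm_word p (mult_w u v) = mult_w (perm_word p u) (perm_word p v)"
  by (simp add: perm_word_def mult_w_def)

lemma pw_one: "perm_word p one_w = one_w"
  by (simp add: perm_word_def one_w_def)

lemma pw_var: "perm_word p (var_w i) = var_w (p i)"
proof (rule ext)
  fix j
  have "(inv p j = i) = (j = p i)" using p_inv1 p_inv2 by metis
  then show "perm_word p (var_w i) j = var_w (p i) j" by (simp add: perm_word_def var_w_def)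
qed

lemma Ind_pw: "Ind (perm_word p w) = p ` Ind w"
proof (rule set_eqI)
  fix j
  have "j \<in> Ind (perm_word p w) \<longleftrightarrow> inv p j \<in> Ind w" by (simp add: Ind_def perm_word_def)
  also have "\<dots> \<longleftrightarrow> j \<in> p ` Ind w"
  proof
    assume "inv p j \<in> Ind w" then show "j \<in> p ` Ind w" using p_inv1[of j] by (metis imageI)
  next
    assume "j \<in> p ` Ind w" then show "inv p j \<in> Ind w" using p_inv2 by auto
  qed
  finally show "j \<in> Ind (perm_word p w) \<longleftrightarrow> j \<in> p ` Ind w" .
qed

lemma card_Ind_pw: "card (Ind (perm_word p w)) = card (Ind w)"
  unfolding Ind_pw by (rule card_image[OF permutes_inj_on[OF p]])

lemma divides_pw: "divides_w (perm_word p u) (perm_word p w) \<longleftrightarrow> divides_w u w"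
proof
  assume h: "divides_w (perm_word p u) (perm_word p w)"
  show "divides_w u w" unfolding divides_w_def
  proof
    fix i
    have "perm_word p u (p i) \<le> perm_word p w (p i)" using h by (simp add: divides_w_def)
    then show "u i \<le> w i" by (simp add: perm_word_def p_inv2)
  qed
next
  assume "divides_w u w" then show "divides_w (perm_word p u) (perm_word p w)"
    by (simp add: divides_w_def perm_word_def)
qed

lemma lt_inv: "(inv p i < n) = (i < n)"
  using permutes_in_image[OF p, of "inv p i"] p_inv1[of i] by simp

lemma psi_pw: "psi n (perm_word p w) = perm_vec p (psi n w)"
  by (rule ext) (simp add: psi_def perm_word_def perm_vec_def lt_inv)

lemma pv_inv: "perm_vec (inv p) (perm_vec p c) = c"
  by (simp add: perm_vec_def permutes_inv_inv[OF p] p_inv2)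

lemma pv_inv2: "perm_vec p (perm_vec (inv p) c) = c"
  by (simp add: perm_vec_def permutes_inv_inv[OF p] p_inv1)

lemma pv_xor: "perm_vec p (xorv a b) = xorv (perm_vec p a) (perm_vec p b)"
  by (simp add: perm_vec_def xorv_def)

lemma pv_zero: "perm_vec p (\<lambda>_. False) = (\<lambda>_. False)"
  by (simp add: perm_vec_def)

lemma pv_vectors: "c \<in> vectors n \<Longrightarrow> perm_vec p c \<in> vectors n"
  by (auto simp: vectors_def perm_vec_def lt_inv[symmetric] dest: spec[of _ "inv p _"]) (meson not_le lt_inv)

lemma pv_inj: "perm_vec p a = perm_vec p b \<longleftrightarrow> a = b"
  by (metis pv_inv)

lemma blc_perm: "binary_linear_code n C \<Longrightarrow> binary_linear_code n (perm_code p C)"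
proof -
  assume C: "binary_linear_code n C"
  have 1: "perm_code p C \<subseteq> vectors n" using blc_sub[OF C] pv_vectors by (auto simp: perm_code_def)
  have 2: "(\<lambda>_. False) \<in> perm_code p C"
    using blc_zero[OF C] pv_zero unfolding perm_code_def by (metis imageI)
  have 3: "\<forall>a\<in>perm_code p C. \<forall>b\<in>perm_code p C. (\<lambda>i. a i \<noteq> b i) \<in> perm_code p C"
  proof (intro ballI)
    fix a b assume "a \<in> perm_code p C" "b \<in> perm_code p C"
    then obtain a0 b0 where "a0 \<in> C" "b0 \<in> C" "a = perm_vec p a0" "b = perm_vec p b0"
      by (auto simp: perm_code_def)
    then have "(\<lambda>i. a i \<noteq> b i) = perm_vec p (xorv a0 b0)" by (simp add: xorv_def perm_vec_def)
    moreover have "xorv a0 b0 \<in> C" by (rule blc_xor[OF C \<open>a0 \<in> C\<close> \<open>b0 \<in> C\<close>])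
    ultimately show "(\<lambda>i. a i \<noteq> b i) \<in> perm_code p C" by (simp add: perm_code_def)
  qed
  show ?thesis unfolding binary_linear_code_def using 1 2 3 by blast
qed

lemma vec_mat_perm:
  "vec_mat n m (perm_vec p c) (\<lambda>i j. H (inv p i) j) = vec_mat n m c H"
proof (rule ext)
  fix j
  have e: "{i. i < n \<and> perm_vec p c i \<and> H (inv p i) j} = p ` {i. i < n \<and> c i \<and> H i j}"
  proof (rule set_eqI)
    fix i
    show "i \<in> {i. i < n \<and> perm_vec p c i \<and> H (inv p i) j} \<longleftrightarrow> i \<in> p ` {i. i < n \<and> c i \<and> H i j}"
    proof
      assume "i \<in> {i. i < n \<and> perm_vec p c i \<and> H (inv p i) j}"
      then have "inv p i \<in> {i. i < n \<and> c i \<and> H i j}" by (simp add: perm_vec_def lt_inv)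
      then show "i \<in> p ` {i. i < n \<and> c i \<and> H i j}" using p_inv1[of i] by (metis imageI)
    next
      assume "i \<in> p ` {i. i < n \<and> c i \<and> H i j}"
      then obtain k where "k < n" "c k" "H k j" "i = p k" by auto
      then show "i \<in> {i. i < n \<and> perm_vec p c i \<and> H (inv p i) j}"
        using lt_inv[of "p k"] by (simp add: perm_vec_def p_inv2)
    qed
  qed
  have "card {i. i < n \<and> perm_vec p c i \<and> H (inv p i) j} = card {i. i < n \<and> c i \<and> H i j}"
    unfolding e by (rule card_image[OF permutes_inj_on[OF p]])
  then show "vec_mat n m (perm_vec p c) (\<lambda>i j. H (inv p i) j) j = vec_mat n m c H j"
    by (simp add: vec_mat_def)
qed

end

fun PI :: "(nat \<Rightarrow> nat) \<Rightarrow> rstate \<Rightarrow> rstate" where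
  "PI \<sigma> (L, N, G) = (perm_word \<sigma> ` L, perm_word \<sigma> ` N, perm_binomials \<sigma> G)"

lemma img_succ:
  assumes sp: "\<sigma> permutes {..<n}"
  shows "perm_word \<sigma> ` {mult_w w (var_w i) | i. i < n} = {mult_w (perm_word \<sigma> w) (var_w i) | i. i < n}"
proof
  show "perm_word \<sigma> ` {mult_w w (var_w i) | i. i < n} \<subseteq> {mult_w (perm_word \<sigma> w) (var_w i) | i. i < n}"
  proof
    fix x assume "x \<in> perm_word \<sigma> ` {mult_w w (var_w i) | i. i < n}"
    then obtain i where i: "i < n" "x = perm_word \<sigma> (mult_w w (var_w i))" by blast
    then have "x = mult_w (perm_word \<sigma> w) (var_w (\<sigma> i))" by (simp add: pw_mult[OF sp] pw_var[OF sp])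
    moreover have "\<sigma> i < n" using permutes_in_image[OF sp, of i] i(1) by simp
    ultimately show "x \<in> {mult_w (perm_word \<sigma> w) (var_w i) | i. i < n}" by blast
  qed
next
  show "{mult_w (perm_word \<sigma> w) (var_w i) | i. i < n} \<subseteq> perm_word \<sigma> ` {mult_w w (var_w i) | i. i < n}"
  proof
    fix x assume "x \<in> {mult_w (perm_word \<sigma> w) (var_w i) | i. i < n}"
    then obtain i where i: "i < n" "x = mult_w (perm_word \<sigma> w) (var_w i)" by blast
    have "inv \<sigma> i < n" using lt_inv[OF sp] i(1) by simp
    moreover have "x = perm_word \<sigma> (mult_w w (var_w (inv \<sigma> i)))"
      using i(2) by (simp add: pw_mult[OF sp] pw_var[OF sp] p_inv1[OF sp])
    ultimately show "x \<in> perm_word \<sigma> ` {mult_w w (var_w i) | i. i < n}" by blast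
  qed
qed

lemma sim_step:
  assumes sp: "\<sigma> permutes {..<n}"
    and xi': "\<And>w. xi' (perm_word \<sigma> w) = xi w"
    and ord': "\<And>u v. ord' (perm_word \<sigma> u) (perm_word \<sigma> v) = ord u v"
    and st: "R_step n xi ord s s'"
  shows "R_step n xi' ord' (PI \<sigma> s) (PI \<sigma> s')"
proof -
  let ?p = "perm_word \<sigma>"
  have err': "\<And>a b. err_less ord' (?p a) (?p b) = err_less ord a b"
    by (simp add: err_less_def card_Ind_pw[OF sp] ord')
  have inj: "inj ?p" by (rule pw_inj'[OF sp])
  have minL: "\<forall>w'\<in>?p ` L. w' \<noteq> ?p w \<longrightarrow> err_less ord' (?p w) w'"
    if "\<forall>w'\<in>L. w' \<noteq> w \<longrightarrow> err_less ord w w'" for L w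
  proof
    fix w' assume "w' \<in> ?p ` L"
    then obtain x where x: "x \<in> L" "w' = ?p x" by blast
    show "w' \<noteq> ?p w \<longrightarrow> err_less ord' (?p w) w'"
      using that x err' by auto
  qed
  have divG: "(\<exists>(u,v)\<in>perm_binomials \<sigma> G. divides_w u (?p w)) \<longleftrightarrow> (\<exists>(u,v)\<in>G. divides_w u w)" for G w
  proof
    assume "\<exists>(u,v)\<in>perm_binomials \<sigma> G. divides_w u (?p w)"
    then obtain a b where ab: "(a,b) \<in> perm_binomials \<sigma> G" "divides_w a (?p w)" by blast
    then obtain u v where uv: "(u,v) \<in> G" "a = ?p u" by (auto simp: perm_binomials_def)
    then have "divides_w u w" using ab(2) divides_pw[OF sp] by simp
    then show "\<exists>(u,v)\<in>G. divides_w u w" using uv(1) by blast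
  next
    assume "\<exists>(u,v)\<in>G. divides_w u w"
    then obtain u v where uv: "(u,v) \<in> G" "divides_w u w" by blast
    then have "(?p u, ?p v) \<in> perm_binomials \<sigma> G" by (force simp: perm_binomials_def)
    moreover have "divides_w (?p u) (?p w)" using uv(2) divides_pw[OF sp] by simp
    ultimately show "\<exists>(u,v)\<in>perm_binomials \<sigma> G. divides_w u (?p w)" by blast
  qed
  have diffL: "?p ` (L - {w}) = ?p ` L - {?p w}" for L w
    using image_set_diff[OF inj, of L "{w}"] by simp
  show ?thesis
    using st
  proof (cases rule: R_step.cases)
    case (discard w L G N)
    have "R_step n xi' ord' (?p ` L, ?p ` N, perm_binomials \<sigma> G) (?p ` L - {?p w}, ?p ` N, perm_binomials \<sigma> G)"
    proof (rule R_step.discard)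
      show "?p w \<in> ?p ` L" using discard(3) by blast
      show "\<forall>w'\<in>?p ` L. w' \<noteq> ?p w \<longrightarrow> err_less ord' (?p w) w'" by (rule minL[OF discard(4)])
      show "\<exists>(u,v)\<in>perm_binomials \<sigma> G. divides_w u (?p w)" using divG discard(5) by blast
    qed
    then show ?thesis using discard(1,2) diffL by simp
  next
    case (newbin w L G w' N)
    have "R_step n xi' ord' (?p ` L, ?p ` N, perm_binomials \<sigma> G)
        (?p ` L - {?p w}, ?p ` N, perm_binomials \<sigma> G \<union> {(?p w, ?p w')})"
    proof (rule R_step.newbin)
      show "?p w \<in> ?p ` L" using newbin(3) by blast
      show "\<forall>w'\<in>?p ` L. w' \<noteq> ?p w \<longrightarrow> err_less ord' (?p w) w'" by (rule minL[OF newbin(4)])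
      show "\<not> (\<exists>(u,v)\<in>perm_binomials \<sigma> G. divides_w u (?p w))" using divG newbin(5) by blast
      show "?p w' \<in> ?p ` N" using newbin(6) by blast
      show "xi' (?p w') = xi' (?p w)" using newbin(7) xi' by simp
    qed
    moreover have "perm_binomials \<sigma> (G \<union> {(w, w')}) = perm_binomials \<sigma> G \<union> {(?p w, ?p w')}"
      by (simp add: perm_binomials_def)
    ultimately show ?thesis using newbin(1,2) diffL by simp
  next
    case (newstd w L G N)
    have "R_step n xi' ord' (?p ` L, ?p ` N, perm_binomials \<sigma> G)
        ((?p ` L - {?p w}) \<union> {mult_w (?p w) (var_w i) | i. i < n}, ?p ` N \<union> {?p w}, perm_binomials \<sigma> G)"
    proof (rule R_step.newstd)
      show "?p w \<in> ?p ` L" using newstd(3) by blast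
      show "\<forall>w'\<in>?p ` L. w' \<noteq> ?p w \<longrightarrow> err_less ord' (?p w) w'" by (rule minL[OF newstd(4)])
      show "\<not> (\<exists>(u,v)\<in>perm_binomials \<sigma> G. divides_w u (?p w))" using divG newstd(5) by blast
      show "\<not> (\<exists>w'\<in>?p ` N. xi' w' = xi' (?p w))" using newstd(6) xi' by auto
    qed
    moreover have "?p ` ((L - {w}) \<union> {mult_w w (var_w i) | i. i < n}) =
        (?p ` L - {?p w}) \<union> {mult_w (?p w) (var_w i) | i. i < n}"
      using diffL img_succ[OF sp] by (simp add: image_Un)
    ultimately show ?thesis using newstd(1,2) by simp
  qed
qed

lemma sim_star:
  assumes sp: "\<sigma> permutes {..<n}"
    and xi': "\<And>w. xi' (perm_word \<sigma> w) = xi w"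
    and ord': "\<And>u v. ord' (perm_word \<sigma> u) (perm_word \<sigma> v) = ord u v"
    and st: "(R_step n xi ord)\<^sup>*\<^sup>* s s'"
  shows "(R_step n xi' ord')\<^sup>*\<^sup>* (PI \<sigma> s) (PI \<sigma> s')"
  using st
proof (induction rule: rtranclp_induct)
  case base then show ?case by simp
next
  case (step y z)
  have "R_step n xi' ord' (PI \<sigma> y) (PI \<sigma> z)" by (rule sim_step[OF sp xi' ord' step(2)])
  then show ?case using step(3) by simp
qed

lemma perm_RB:
  assumes sp: "\<sigma> permutes {..<n}" and C: "binary_linear_code n C" and RB: "reduced_basis n C G"
  shows "reduced_basis n (perm_code \<sigma> C) (perm_binomials \<sigma> G)"
proof -
  obtain ord m H N where adm: "admissible n ord" and pc: "parity_check n C m H"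
    and ro: "R_output n (syndrome n m H) ord N G"
    using RB unfolding reduced_basis_def by blast
  have ip: "inv \<sigma> permutes {..<n}" by (rule permutes_inv[OF sp])
  let ?q = "perm_word (inv \<sigma>)"
  define ord' where "ord' = (\<lambda>u v. ord (?q u) (?q v))"
  define H' where "H' = (\<lambda>i j. H (inv \<sigma> i) j)"
  have qw: "\<And>w. w \<in> words n \<Longrightarrow> ?q w \<in> words n" by (rule pw_words[OF ip])
  have adm': "admissible n ord'"
    unfolding admissible_def
  proof (intro conjI ballI impI)
    fix u assume "u \<in> words n"
    then show "\<not> ord' u u" unfolding ord'_def using adm_irrefl[OF adm qw] by blast
  next
    fix u v w assume "u \<in> words n" "v \<in> words n" "w \<in> words n" "ord' u v" "ord' v w"
    then show "ord' u w" unfolding ord'_def using adm_trans[OF adm qw qw qw] by blast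
  next
    fix u v assume "u \<in> words n" "v \<in> words n" "u \<noteq> v"
    moreover then have "?q u \<noteq> ?q v" using pw_inj[OF ip] by blast
    ultimately show "ord' u v \<or> ord' v u" unfolding ord'_def using adm_total[OF adm qw qw] by blast
  next
    fix w assume w: "w \<in> words n" "w \<noteq> one_w"
    have "?q w \<noteq> one_w" using w(2) pw_inj[OF ip, of w one_w] pw_one[OF ip] by simp
    then show "ord' one_w w" unfolding ord'_def using adm_one[OF adm qw[OF w(1)]] pw_one[OF ip] by simp
  next
    fix u v w assume "u \<in> words n" "v \<in> words n" "w \<in> words n" "ord' u v"
    then show "ord' (mult_w u w) (mult_w v w)" unfolding ord'_def
      using adm_mult[OF adm qw qw qw] pw_mult[OF ip] by simp
  qed
  have PC: "\<forall>c\<in>vectors n. c \<in> C \<longleftrightarrow> vec_mat n m c H = (\<lambda>_. False)"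
    using pc unfolding parity_check_def by (elim conjE) assumption
  have card: "card C * 2 ^ m = 2 ^ n"
    using pc unfolding parity_check_def by (elim conjE) assumption
  have pc': "parity_check n (perm_code \<sigma> C) m H'"
    unfolding parity_check_def
  proof (intro conjI ballI)
    fix c assume cv: "c \<in> vectors n"
    define c0 where "c0 = perm_vec (inv \<sigma>) c"
    have cc0: "c = perm_vec \<sigma> c0" unfolding c0_def by (simp add: pv_inv2[OF sp])
    have c0v: "c0 \<in> vectors n" unfolding c0_def by (rule pv_vectors[OF ip cv])
    have "c \<in> perm_code \<sigma> C \<longleftrightarrow> c0 \<in> C"
    proof
      assume "c \<in> perm_code \<sigma> C"
      then obtain x where "x \<in> C" "c = perm_vec \<sigma> x" by (auto simp: perm_code_def)
      then show "c0 \<in> C" using cc0 pv_inj[OF sp] by simp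
    next
      assume "c0 \<in> C" then show "c \<in> perm_code \<sigma> C" using cc0 by (simp add: perm_code_def)
    qed
    also have "\<dots> \<longleftrightarrow> vec_mat n m c0 H = (\<lambda>_. False)" using PC c0v by blast
    also have "vec_mat n m c0 H = vec_mat n m c H'"
      unfolding cc0 H'_def by (rule vec_mat_perm[OF sp, symmetric])
    finally show "c \<in> perm_code \<sigma> C \<longleftrightarrow> vec_mat n m c H' = (\<lambda>_. False)" .
  next
    have "inj_on (perm_vec \<sigma>) C" by (rule inj_onI) (simp add: pv_inj[OF sp])
    then have "card (perm_code \<sigma> C) = card C" unfolding perm_code_def by (rule card_image)
    then show "card (perm_code \<sigma> C) * 2 ^ m = 2 ^ n" using card by simp
  qed
  have xi': "syndrome n m H' (perm_word \<sigma> w) = syndrome n m H w" for w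
    unfolding syndrome_def psi_pw[OF sp] H'_def by (rule vec_mat_perm[OF sp])
  have ordp: "ord' (perm_word \<sigma> u) (perm_word \<sigma> v) = ord u v" for u v
    unfolding ord'_def by (simp add: pw_inv_pw[OF sp])
  have "(R_step n (syndrome n m H') ord')\<^sup>*\<^sup>* (PI \<sigma> ({one_w}, {}, {})) (PI \<sigma> ({}, N, G))"
    by (rule sim_star[OF sp xi' ordp ro[unfolded R_output_def]])
  then have "R_output n (syndrome n m H') ord' (perm_word \<sigma> ` N) (perm_binomials \<sigma> G)"
    unfolding R_output_def by (simp add: pw_one[OF sp] perm_binomials_def)
  then show ?thesis unfolding reduced_basis_def using adm' pc' by blast
qed

lemma rtz_diff:
  assumes D: "binary_linear_code n D" and B: "\<forall>(u,v)\<in>B. xorv (psi n u) (psi n v) \<in> D"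
    and r: "reduces_to_zero B (a, b)"
  shows "xorv (psi n a) (psi n b) \<in> D"
proof -
  obtain z where z: "(red1 B)\<^sup>*\<^sup>* a z" "(red1 B)\<^sup>*\<^sup>* b z"
    using r unfolding reduces_to_zero_def by auto
  have 1: "xorv (psi n a) (psi n z) \<in> D" by (rule red_pres_star[OF D B z(1)])
  have 2: "xorv (psi n b) (psi n z) \<in> D" by (rule red_pres_star[OF D B z(2)])
  have "xorv (xorv (psi n a) (psi n z)) (xorv (psi n z) (psi n b)) \<in> D"
    using blc_xor[OF D 1] 2 xorv_comm by metis
  then show ?thesis by (simp add: xorv_chain)
qed

theorem theorem4p2:
  fixes n :: nat and C C' :: "bvec set" and \<sigma> :: "nat \<Rightarrow> nat"
    and G G' :: "(word \<times> word) set"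
  assumes "binary_linear_code n C" and "binary_linear_code n C'"
    and "\<sigma> permutes {..<n}"
    and "reduced_basis n C G" and "reduced_basis n C' G'"
  shows "(C' = perm_code \<sigma> C \<longleftrightarrow> reduced_basis n C' (perm_binomials \<sigma> G)) \<and>
         (reduced_basis n C' (perm_binomials \<sigma> G) \<longleftrightarrow>
            ((\<forall>b\<in>perm_binomials \<sigma> G. reduces_to_zero G' b) \<and>
             (\<forall>b\<in>G'. reduces_to_zero (perm_binomials \<sigma> G) b)))"
proof -
  note C = assms(1) and C' = assms(2) and sp = assms(3) and RBG = assms(4) and RBG' = assms(5)
  let ?S = "perm_binomials \<sigma> G"
  let ?sC = "perm_code \<sigma> C"
  have sC: "binary_linear_code n ?sC" by (rule blc_perm[OF sp C])
  have P1G: "\<forall>(u,v)\<in>G. u \<in> words n \<and> v \<in> words n \<and> xorv (psi n u) (psi n v) \<in> C"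
    by (rule RB_P1[OF C RBG])
  have P1G': "\<forall>(u,v)\<in>G'. u \<in> words n \<and> v \<in> words n \<and> xorv (psi n u) (psi n v) \<in> C'"
    by (rule RB_P1[OF C' RBG'])
  have P1G'd: "\<forall>(u,v)\<in>G'. xorv (psi n u) (psi n v) \<in> C'" using P1G' by blast
  have SD: "\<forall>(u,v)\<in>?S. u \<in> words n \<and> v \<in> words n \<and> xorv (psi n u) (psi n v) \<in> ?sC"
  proof (intro ballI, clarify)
    fix a b assume "(a,b) \<in> ?S"
    then obtain u v where uv: "(u,v) \<in> G" "a = perm_word \<sigma> u" "b = perm_word \<sigma> v"
      by (auto simp: perm_binomials_def)
    have h: "u \<in> words n" "v \<in> words n" "xorv (psi n u) (psi n v) \<in> C" using P1G uv(1) by auto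
    have "xorv (psi n a) (psi n b) = perm_vec \<sigma> (xorv (psi n u) (psi n v))"
      using uv(2,3) by (simp add: psi_pw[OF sp] pv_xor[OF sp])
    then have "xorv (psi n a) (psi n b) \<in> ?sC" using h(3) by (simp add: perm_code_def)
    then show "a \<in> words n \<and> b \<in> words n \<and> xorv (psi n a) (psi n b) \<in> ?sC"
      using uv(2,3) h(1,2) pw_words[OF sp] by simp
  qed
  have SDd: "\<forall>(u,v)\<in>?S. xorv (psi n u) (psi n v) \<in> ?sC" using SD by blast
  have CC: "?sC \<subseteq> C'" if SC': "\<forall>(u,v)\<in>?S. xorv (psi n u) (psi n v) \<in> C'"
  proof -
    define E where "E = {c \<in> vectors n. perm_vec \<sigma> c \<in> C'}"
    have E: "binary_linear_code n E" unfolding binary_linear_code_def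
    proof (intro conjI ballI)
      show "E \<subseteq> vectors n" by (auto simp: E_def)
      show "(\<lambda>_. False) \<in> E" using blc_zero[OF C'] pv_zero[OF sp] by (simp add: E_def vectors_def)
      fix a b assume "a \<in> E" "b \<in> E"
      then have ab: "a \<in> vectors n" "b \<in> vectors n" "perm_vec \<sigma> a \<in> C'" "perm_vec \<sigma> b \<in> C'"
        by (auto simp: E_def)
      have "perm_vec \<sigma> (xorv a b) \<in> C'" using blc_xor[OF C' ab(3,4)] pv_xor[OF sp] by simp
      moreover have "xorv a b \<in> vectors n" using ab(1,2) by (auto simp: vectors_def xorv_def)
      ultimately show "(\<lambda>i. a i \<noteq> b i) \<in> E" by (simp add: E_def xorv_def)
    qed
    have GE: "\<forall>(u,v)\<in>G. xorv (psi n u) (psi n v) \<in> E"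
    proof (intro ballI, clarify)
      fix u v assume uv: "(u,v) \<in> G"
      then have "(perm_word \<sigma> u, perm_word \<sigma> v) \<in> ?S" by (force simp: perm_binomials_def)
      then have "xorv (psi n (perm_word \<sigma> u)) (psi n (perm_word \<sigma> v)) \<in> C'" using SC' by blast
      then have "perm_vec \<sigma> (xorv (psi n u) (psi n v)) \<in> C'" by (simp add: psi_pw[OF sp] pv_xor[OF sp])
      moreover have "xorv (psi n u) (psi n v) \<in> vectors n"
        using psi_vec[of n u] psi_vec[of n v] by (auto simp: vectors_def xorv_def)
      ultimately show "xorv (psi n u) (psi n v) \<in> E" by (simp add: E_def)
    qed
    have "C \<subseteq> E" by (rule RB_P3[OF C RBG E GE])
    then show ?thesis by (auto simp: E_def perm_code_def)
  qed
  have AB: "reduced_basis n C' ?S" if "C' = ?sC"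
    using perm_RB[OF sp C RBG] that by simp
  have BA: "C' = ?sC" if RBS: "reduced_basis n C' ?S"
  proof
    show "C' \<subseteq> ?sC" by (rule RB_P3[OF C' RBS sC SDd])
    have "\<forall>(u,v)\<in>?S. xorv (psi n u) (psi n v) \<in> C'" using RB_P1[OF C' RBS] by blast
    then show "?sC \<subseteq> C'" by (rule CC)
  qed
  have BC: "(\<forall>b\<in>?S. reduces_to_zero G' b) \<and> (\<forall>b\<in>G'. reduces_to_zero ?S b)"
    if RBS: "reduced_basis n C' ?S"
  proof
    have eq: "C' = ?sC" by (rule BA[OF RBS])
    show "\<forall>b\<in>?S. reduces_to_zero G' b"
    proof (intro ballI)
      fix b assume "b \<in> ?S"
      then obtain u v where "b = (u,v)" "(u,v) \<in> ?S" by (cases b) auto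
      moreover have "u \<in> words n" "v \<in> words n" "xorv (psi n u) (psi n v) \<in> C'"
        using SD calculation(2) eq by auto
      ultimately show "reduces_to_zero G' b" using RB_P2[OF C' RBG'] by simp
    qed
    show "\<forall>b\<in>G'. reduces_to_zero ?S b"
    proof (intro ballI)
      fix b assume "b \<in> G'"
      then obtain u v where "b = (u,v)" "(u,v) \<in> G'" by (cases b) auto
      moreover have "u \<in> words n" "v \<in> words n" "xorv (psi n u) (psi n v) \<in> C'"
        using P1G' calculation(2) by auto
      ultimately show "reduces_to_zero ?S b" using RB_P2[OF C' RBS] by simp
    qed
  qed
  have CA: "C' = ?sC"
    if h: "(\<forall>b\<in>?S. reduces_to_zero G' b) \<and> (\<forall>b\<in>G'. reduces_to_zero ?S b)"
  proof
    have "\<forall>(u,v)\<in>G'. xorv (psi n u) (psi n v) \<in> ?sC"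
    proof (intro ballI, clarify)
      fix u v assume "(u,v) \<in> G'"
      then have "reduces_to_zero ?S (u,v)" using h by blast
      then show "xorv (psi n u) (psi n v) \<in> ?sC" by (rule rtz_diff[OF sC SDd])
    qed
    then show "C' \<subseteq> ?sC" by (rule RB_P3[OF C' RBG' sC])
    have "\<forall>(u,v)\<in>?S. xorv (psi n u) (psi n v) \<in> C'"
    proof (intro ballI, clarify)
      fix u v assume "(u,v) \<in> ?S"
      then have "reduces_to_zero G' (u,v)" using h by blast
      then show "xorv (psi n u) (psi n v) \<in> C'" by (rule rtz_diff[OF C' P1G'd])
    qed
    then show "?sC \<subseteq> C'" by (rule CC)
  qed
  show ?thesis using AB BA BC CA by blast
qed

end
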